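(* Let $N_1,N_2$ be continuous fuzzy negations and $U_1,U_2$ disjunctive uninorms with neutral elements $e_1,e_2\in\,]0,1[$ respectively, and suppose $U_1(N_1(x),y)=U_2(N_2(x),y)$ for all $x,y\in[0,1]$. If $e_1\neq e_2$ or $N_1\neq N_2$ or $U_1\neq U_2$, then: (i) $e_1\neq e_2$, $N_1\neq N_2$ and $U_1\neq U_2$; (ii) the function $f_1:[0,1]\to[0,1]$, $f_1(x)=U_1(x,e_2)$, is continuous and non-decreasing with $f_1(0)=0$ and $f_1(1)=1$; (iii) the function $f_2:[0,1]\to[0,1]$, $f_2(x)=U_2(x,e_1)$, is continuous and non-decreasing with $f_2(0)=0$ and $f_2(1)=1$.
   Context: A fuzzy negation is a non-increasing map $N:[0,1]\to[0,1]$ with $N(0)=1$, $N(1)=0$. A uninorm is a map $U:[0,1]^2\to[0,1]$ that is commutative, associative, non-decreasing in each variable, and has a neutral element $e\in[0,1]$. A uninorm is disjunctive if $U(1,0)=1$. *)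

theory Defs
  imports "HOL-Analysis.Analysis"
begin

definition fuzzy_negation :: "(real \<Rightarrow> real) \<Rightarrow> bool" where
  "fuzzy_negation N \<longleftrightarrow>
     (\<forall>x\<in>{0..1}. N x \<in> {0..1}) \<and>
     (\<forall>x\<in>{0..1}. \<forall>y\<in>{0..1}. x \<le> y \<longrightarrow> N y \<le> N x) \<and>
     N 0 = 1 \<and> N 1 = 0"

definition uninorm :: "(real \<Rightarrow> real \<Rightarrow> real) \<Rightarrow> real \<Rightarrow> bool" where
  "uninorm U e \<longleftrightarrow>
     e \<in> {0..1} \<and>
     (\<forall>x\<in>{0..1}. \<forall>y\<in>{0..1}. U x y \<in> {0..1}) \<and>
     (\<forall>x\<in>{0..1}. \<forall>y\<in>{0..1}. U x y = U y x) \<and>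
     (\<forall>x\<in>{0..1}. \<forall>y\<in>{0..1}. \<forall>z\<in>{0..1}. U (U x y) z = U x (U y z)) \<and>
     (\<forall>x\<in>{0..1}. \<forall>x'\<in>{0..1}. \<forall>y\<in>{0..1}. \<forall>y'\<in>{0..1}.
        x \<le> x' \<longrightarrow> y \<le> y' \<longrightarrow> U x y \<le> U x' y') \<and>
     (\<forall>x\<in>{0..1}. U x e = x \<and> U e x = x)"

definition disjunctive_uninorm :: "(real \<Rightarrow> real \<Rightarrow> real) \<Rightarrow> real \<Rightarrow> bool" where
  "disjunctive_uninorm U e \<longleftrightarrow> uninorm U e \<and> U 1 0 = 1"

end

theory Submission
  imports Defs
begin

lemma neg_surj:
  assumes "fuzzy_negation N" "continuous_on {0..1} N" "(a::real) \<in> {0..1}"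
  shows "\<exists>x\<in>{0..1}. N x = a"
proof -
  have "N 1 \<le> a" "a \<le> N 0" using assms unfolding fuzzy_negation_def by auto
  from IVT2'[OF this _ assms(2)] show ?thesis by auto
qed

lemma mono_surj_cont:
  fixes f :: "real \<Rightarrow> real"
  assumes mono: "\<And>x y. x \<in> {0..1} \<Longrightarrow> y \<in> {0..1} \<Longrightarrow> x \<le> y \<Longrightarrow> f x \<le> f y"
    and f0: "f 0 = 0" and f1: "f 1 = 1"
    and surj: "\<And>b. b \<in> {0..1} \<Longrightarrow> \<exists>a\<in>{0..1}. f a = b"
  shows "continuous_on {0..1} f"
proof -
  define g where "g x = (if x < 0 then x else if x > 1 then x else f x)" for x
  have fr: "f x \<in> {0..1}" if "x \<in> {0..1}" for x
    using mono[of 0 x] mono[of x 1] that f0 f1 by auto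
  have gm: "g x \<le> g y" if "x \<le> y" for x y
    using that fr[of x] fr[of y] mono[of x y] unfolding g_def by auto
  have "g ` UNIV = UNIV"
  proof (safe)
    fix b :: real
    show "b \<in> range g"
    proof (cases "b < 0 \<or> b > 1")
      case True then have "g b = b" unfolding g_def by auto
      then show ?thesis by (metis rangeI)
    next
      case False
      then obtain a where "a \<in> {0..1}" "f a = b" using surj[of b] by auto
      then have "g a = b" unfolding g_def by auto
      then show ?thesis by (metis rangeI)
    qed
  qed simp
  then have "continuous_on UNIV g"
    by (intro continuous_onI_mono) (auto intro: gm)
  then have "continuous_on {0..1} g" by (rule continuous_on_subset) auto
  then show ?thesis
    by (rule continuous_on_cong[THEN iffD1, rotated 2]) (auto simp: g_def)
qed

lemma part2:
  assumes n1: "fuzzy_negation N1" "continuous_on {0..1} N1"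
    and n2: "fuzzy_negation N2" "continuous_on {0..1} N2"
    and u1: "disjunctive_uninorm U1 e1"
    and u2: "uninorm U2 e2"
    and eq: "\<forall>x\<in>{0..1}. \<forall>y\<in>{0..1}. U1 (N1 x) y = U2 (N2 x) y"
  shows "continuous_on {0..1} (\<lambda>x. U1 x e2) \<and> mono_on {0..1} (\<lambda>x. U1 x e2)
            \<and> (\<forall>x\<in>{0..1}. U1 x e2 \<in> {0..1}) \<and> U1 0 e2 = 0 \<and> U1 1 e2 = 1"
proof -
  have e2: "e2 \<in> {0..1}" using u2 unfolding uninorm_def by auto
  have N2r: "N2 x \<in> {0..1}" if "x \<in> {0..1}" for x using n2 that unfolding fuzzy_negation_def by auto
  have key: "U1 (N1 x) e2 = N2 x" if "x \<in> {0..1}" for x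
    using eq that e2 N2r[OF that] u2 unfolding uninorm_def by auto
  have mono: "U1 x e2 \<le> U1 y e2" if "x \<in> {0..1}" "y \<in> {0..1}" "x \<le> y" for x y
    using u1 that e2 unfolding disjunctive_uninorm_def uninorm_def by auto
  have rng: "\<forall>x\<in>{0..1}. U1 x e2 \<in> {0..1}"
    using u1 e2 unfolding disjunctive_uninorm_def uninorm_def by auto
  have f0: "U1 0 e2 = 0" using key[of 1] n1 n2 unfolding fuzzy_negation_def by auto
  have f1: "U1 1 e2 = 1" using key[of 0] n1 n2 unfolding fuzzy_negation_def by auto
  have surj: "\<exists>a\<in>{0..1}. U1 a e2 = b" if bb: "b \<in> {0..1}" for b
  proof -
    obtain x where x: "x \<in> {0..1}" "N2 x = b" using neg_surj[OF n2 bb] by auto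
    have "N1 x \<in> {0..1}" using n1 x unfolding fuzzy_negation_def by auto
    then show ?thesis using key[OF x(1)] x by auto
  qed
  have "continuous_on {0..1} (\<lambda>x. U1 x e2)"
    by (rule mono_surj_cont) (use mono f0 f1 surj in auto)
  moreover have "mono_on {0..1} (\<lambda>x. U1 x e2)" by (intro mono_onI) (use mono in auto)
  ultimately show ?thesis using rng f0 f1 by auto
qed
theorem mainTheorem3:
  fixes N1 N2 :: "real \<Rightarrow> real" and U1 U2 :: "real \<Rightarrow> real \<Rightarrow> real" and e1 e2 :: real
  assumes "fuzzy_negation N1" and "continuous_on {0..1} N1"
    and "fuzzy_negation N2" and "continuous_on {0..1} N2"
    and "disjunctive_uninorm U1 e1" and "e1 \<in> {0<..<1}"
    and "disjunctive_uninorm U2 e2" and "e2 \<in> {0<..<1}"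
    and "\<forall>x\<in>{0..1}. \<forall>y\<in>{0..1}. U1 (N1 x) y = U2 (N2 x) y"
    and "e1 \<noteq> e2 \<or> (\<exists>x\<in>{0..1}. N1 x \<noteq> N2 x)
         \<or> (\<exists>x\<in>{0..1}. \<exists>y\<in>{0..1}. U1 x y \<noteq> U2 x y)"
  shows "(e1 \<noteq> e2 \<and> (\<exists>x\<in>{0..1}. N1 x \<noteq> N2 x)
            \<and> (\<exists>x\<in>{0..1}. \<exists>y\<in>{0..1}. U1 x y \<noteq> U2 x y))
      \<and> (continuous_on {0..1} (\<lambda>x. U1 x e2) \<and> mono_on {0..1} (\<lambda>x. U1 x e2)
            \<and> (\<forall>x\<in>{0..1}. U1 x e2 \<in> {0..1}) \<and> U1 0 e2 = 0 \<and> U1 1 e2 = 1)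
      \<and> (continuous_on {0..1} (\<lambda>x. U2 x e1) \<and> mono_on {0..1} (\<lambda>x. U2 x e1)
            \<and> (\<forall>x\<in>{0..1}. U2 x e1 \<in> {0..1}) \<and> U2 0 e1 = 0 \<and> U2 1 e1 = 1)"
  proof -
  note u1 = assms(5)[unfolded disjunctive_uninorm_def uninorm_def]
  note u2 = assms(7)[unfolded disjunctive_uninorm_def uninorm_def]
  have N1r: "N1 x \<in> {0..1}" if "x \<in> {0..1}" for x using assms(1) that unfolding fuzzy_negation_def by auto
  have N2r: "N2 x \<in> {0..1}" if "x \<in> {0..1}" for x using assms(3) that unfolding fuzzy_negation_def by auto
  have A: "\<forall>x\<in>{0..1}. N1 x = N2 x" if "e1 = e2"
  proof
    fix x :: real assume x: "x \<in> {0..1}"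
    have "U1 (N1 x) e1 = U2 (N2 x) e1" using assms(9) x u1 by auto
    then show "N1 x = N2 x" using u1 u2 that N1r[OF x] N2r[OF x] by auto
  qed
  have B: "\<forall>a\<in>{0..1}. \<forall>y\<in>{0..1}. U1 a y = U2 a y" if "\<forall>x\<in>{0..1}. N1 x = N2 x"
  proof (intro ballI)
    fix a y :: real assume a: "a \<in> {0..1}" and y: "y \<in> {0..1}"
    obtain x where x: "x \<in> {0..1}" "N1 x = a" using neg_surj[OF assms(1,2) a] by auto
    show "U1 a y = U2 a y" using assms(9) x y that by force
  qed
  have C: "e1 = e2" if "\<forall>a\<in>{0..1}. \<forall>y\<in>{0..1}. U1 a y = U2 a y"
  proof -
    have "U1 e1 e2 = U2 e1 e2" using that u1 u2 by auto
    then show ?thesis using u1 u2 by auto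
  qed
  have i: "e1 \<noteq> e2 \<and> (\<exists>x\<in>{0..1}. N1 x \<noteq> N2 x) \<and> (\<exists>x\<in>{0..1}. \<exists>y\<in>{0..1}. U1 x y \<noteq> U2 x y)"
    using A B C assms(10) by metis
  have ii: "continuous_on {0..1} (\<lambda>x. U1 x e2) \<and> mono_on {0..1} (\<lambda>x. U1 x e2)
            \<and> (\<forall>x\<in>{0..1}. U1 x e2 \<in> {0..1}) \<and> U1 0 e2 = 0 \<and> U1 1 e2 = 1"
    using part2[OF assms(1-5)] assms(7,9) unfolding disjunctive_uninorm_def by blast
  have iii: "continuous_on {0..1} (\<lambda>x. U2 x e1) \<and> mono_on {0..1} (\<lambda>x. U2 x e1)
            \<and> (\<forall>x\<in>{0..1}. U2 x e1 \<in> {0..1}) \<and> U2 0 e1 = 0 \<and> U2 1 e1 = 1"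
    using part2[OF assms(3,4,1,2,7)] assms(5,9) unfolding disjunctive_uninorm_def by auto
  show ?thesis using i ii iii by blast
qed

end
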